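(* Let $\mathcal U$ be a finite nonempty set, $\epsilon_1,\epsilon_2\in(0,1]$, $n_b$ a positive integer, and for each $v\in\mathcal U$ let $a_v\ge0$ be an integer, $\mu_v\in\mathbb R$ and $\sigma_v^2\ge0$. For $p\in[\max\{\epsilon_1,\epsilon_2\},1]$ define $$h_v(p)=\Big(\frac1{\epsilon_2}-\frac1p\Big)a_v^2\mu_v^2n_b+\Big(\frac1{\epsilon_1}-\frac1p\Big)a_v(\mu_v^2+\sigma_v^2)n_b^2+\Big(\frac{p}{\epsilon_1\epsilon_2}-\frac1{\epsilon_1}-\frac1{\epsilon_2}+\frac1p\Big)a_v(\mu_v^2+\sigma_v^2)n_b+\Big(\frac1p-1\Big)a_v^2\mu_v^2n_b^2,$$ $h^*(p)=\max_{v\in\mathcal U}h_v(p)$, and $h'(p)=\max\{h_{v_1}(p),h_{v_2}(p)\}$, where $v_1\in\arg\max_v a_v^2\mu_v^2$ and $v_2\in\arg\max_v a_v(\mu_v^2+\sigma_v^2)$. Then for every $p\in[\max\{\epsilon_1,\epsilon_2\},1]$, $$\frac{h^*(p)}{2}\le h'(p)\le h^*(p).$$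
   Context: Interpretation: $h_v(p)$ is the variance of the SUM join estimator when both tables use universe sampling rate $p$ and uniform sampling rates $\epsilon_1/p$, $\epsilon_2/p$, and all $n_b$ tuples of the second table $T_2$ have join value $v$; $a_v$ is the number of tuples of $T_1$ with join value $v$, and $\mu_v,\sigma_v^2$ are the mean and variance of the aggregated column over those tuples. *)

theory Defs
  imports Complex_Main
begin

text \<open>Variance h_v(p) of the SUM join estimator; a = a_v, mu = mu_v, s2 = sigma_v^2.\<close>
definition hv :: "real \<Rightarrow> real \<Rightarrow> nat \<Rightarrow> nat \<Rightarrow> real \<Rightarrow> real \<Rightarrow> real \<Rightarrow> real" where
  "hv e1 e2 nb a mu s2 p =
     (1/e2 - 1/p) * (real a)^2 * mu^2 * real nb
   + (1/e1 - 1/p) * real a * (mu^2 + s2) * (real nb)^2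
   + (p/(e1*e2) - 1/e1 - 1/e2 + 1/p) * real a * (mu^2 + s2) * real nb
   + (1/p - 1) * (real a)^2 * mu^2 * (real nb)^2"

end

theory Submission
  imports Defs
begin

lemma hv_decomp:
  assumes "p > 0"
  shows "hv e1 e2 nb a mu s2 p =
     ((real a)^2 * mu^2) * ((1/e2 - 1/p) * real nb + (1/p - 1) * (real nb)^2)
   + (real a * (mu^2 + s2)) * ((1/e1 - 1/p) * (real nb)^2 + (p/(e1*e2) - 1/e1 - 1/e2 + 1/p) * real nb)"
  unfolding hv_def by (simp add: algebra_simps add_divide_distrib)

theorem lemma7:
  fixes U :: "'a set" and e1 e2 p :: real and nb :: nat
    and a :: "'a \<Rightarrow> nat" and mu s2 :: "'a \<Rightarrow> real" and v1 v2 :: 'a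
  assumes "finite U" and "U \<noteq> {}"
    and "0 < e1" "e1 \<le> 1" "0 < e2" "e2 \<le> 1"
    and "0 < nb"
    and "\<forall>v\<in>U. s2 v \<ge> 0"
    and "v1 \<in> U" "\<forall>v\<in>U. (real (a v))^2 * (mu v)^2 \<le> (real (a v1))^2 * (mu v1)^2"
    and "v2 \<in> U" "\<forall>v\<in>U. real (a v) * ((mu v)^2 + s2 v) \<le> real (a v2) * ((mu v2)^2 + s2 v2)"
    and "max e1 e2 \<le> p" "p \<le> 1"
  shows "Max ((\<lambda>v. hv e1 e2 nb (a v) (mu v) (s2 v) p) ` U) / 2
           \<le> max (hv e1 e2 nb (a v1) (mu v1) (s2 v1) p) (hv e1 e2 nb (a v2) (mu v2) (s2 v2) p)
       \<and> max (hv e1 e2 nb (a v1) (mu v1) (s2 v1) p) (hv e1 e2 nb (a v2) (mu v2) (s2 v2) p)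
           \<le> Max ((\<lambda>v. hv e1 e2 nb (a v) (mu v) (s2 v) p) ` U)"
proof -
  define h where "h v = hv e1 e2 nb (a v) (mu v) (s2 v) p" for v
  define A where "A = (1/e2 - 1/p) * real nb + (1/p - 1) * (real nb)^2"
  define B where "B = (1/e1 - 1/p) * (real nb)^2 + (p/(e1*e2) - 1/e1 - 1/e2 + 1/p) * real nb"
  define X where "X v = (real (a v))^2 * (mu v)^2" for v
  define Y where "Y v = real (a v) * ((mu v)^2 + s2 v)" for v
  have p0: "p > 0" "e1 \<le> p" "e2 \<le> p" using assms by auto
  have hd: "h v = X v * A + Y v * B" for v
    unfolding h_def X_def Y_def A_def B_def using hv_decomp[OF p0(1)] by simp
  have i1: "1/p \<le> 1/e2" "1/p \<le> 1/e1" "1 \<le> 1/p"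
    using p0 assms by (auto simp: divide_simps)
  have A0: "A \<ge> 0" unfolding A_def using i1 by (intro add_nonneg_nonneg mult_nonneg_nonneg) auto
  have f: "p/(e1*e2) - 1/e1 - 1/e2 + 1/p = (1/p) * ((p/e1 - 1) * (p/e2 - 1))"
    using p0 assms by (simp add: field_simps)
  have g: "p/e1 - 1 \<ge> 0" "p/e2 - 1 \<ge> 0" using p0 assms by (auto simp: divide_simps)
  have B0: "B \<ge> 0" unfolding B_def f using i1 g p0
    by (intro add_nonneg_nonneg mult_nonneg_nonneg) auto
  have X0: "X v \<ge> 0" for v unfolding X_def by simp
  have Y0: "v \<in> U \<Longrightarrow> Y v \<ge> 0" for v unfolding Y_def using assms(8) by simp
  have fin: "finite (h ` U)" "h ` U \<noteq> {}" using assms(1,2) by auto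
  have up: "max (h v1) (h v2) \<le> Max (h ` U)"
    using fin assms(9,11) by (simp add: Max_ge_iff)
  obtain w where w: "w \<in> U" "Max (h ` U) = h w"
    using Max_in[OF fin] by auto
  have "h w \<le> X v1 * A + Y v2 * B"
    unfolding hd using assms(10,12) w(1) A0 B0 unfolding X_def Y_def
    by (intro add_mono mult_right_mono) auto
  also have "X v1 * A \<le> h v1" unfolding hd using Y0[OF assms(9)] B0 by simp
  also have "Y v2 * B \<le> h v2" unfolding hd using X0 A0 by simp
  finally have "h w \<le> h v1 + h v2" by simp
  hence lo: "Max (h ` U) / 2 \<le> max (h v1) (h v2)" using w by linarith
  show ?thesis using up lo unfolding h_def by simp
qed

end
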